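(* Let $F=(A,R)$ be an abstract argumentation framework. If $S$ is an initial set of $F$, then there is a strongly connected component $F'=(A',R')$ of $F$ with $S\subseteq A'$.
   Context: An abstract argumentation framework is a pair $F=(A,R)$ with $A$ a finite set and $R\subseteq A\times A$ ($a\to b$ means $(a,b)\in R$). $S\subseteq A$ is admissible if it is conflict-free and every attacker of an element of $S$ is attacked by some element of $S$. An initial set is a non-empty admissible set with no non-empty admissible proper subset. For $X\subseteq A$, $F|_X=(X,R\cap(X\times X))$. A strongly connected component (SCC) of $F$ is a framework $F|_{A'}$ such that there is a directed path in $F|_{A'}$ between any two arguments of $A'$ and $A'$ is maximal with this property. *)

theory Defs
  imports Main
begin

definition AF :: "'a set \<Rightarrow> 'a rel \<Rightarrow> bool" where
  "AF A R \<longleftrightarrow> finite A \<and> R \<subseteq> A \<times> A"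

definition conflict_free :: "'a rel \<Rightarrow> 'a set \<Rightarrow> bool" where
  "conflict_free R S \<longleftrightarrow> (\<forall>a\<in>S. \<forall>b\<in>S. (a, b) \<notin> R)"

definition admissible :: "'a set \<Rightarrow> 'a rel \<Rightarrow> 'a set \<Rightarrow> bool" where
  "admissible A R S \<longleftrightarrow> S \<subseteq> A \<and> conflict_free R S \<and>
     (\<forall>a\<in>S. \<forall>b. (b, a) \<in> R \<longrightarrow> (\<exists>c\<in>S. (c, b) \<in> R))"

definition initial_set :: "'a set \<Rightarrow> 'a rel \<Rightarrow> 'a set \<Rightarrow> bool" where
  "initial_set A R S \<longleftrightarrow> S \<noteq> {} \<and> admissible A R S \<and>
     (\<forall>T. T \<subset> S \<and> T \<noteq> {} \<longrightarrow> \<not> admissible A R T)"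

definition restrict_rel :: "'a rel \<Rightarrow> 'a set \<Rightarrow> 'a rel" where
  "restrict_rel R X = R \<inter> (X \<times> X)"

definition strongly_connected :: "'a rel \<Rightarrow> 'a set \<Rightarrow> bool" where
  "strongly_connected R X \<longleftrightarrow> (\<forall>a\<in>X. \<forall>b\<in>X. (a, b) \<in> (restrict_rel R X)\<^sup>*)"

definition is_SCC :: "'a set \<Rightarrow> 'a rel \<Rightarrow> 'a set \<Rightarrow> bool" where
  "is_SCC A R A' \<longleftrightarrow> A' \<subseteq> A \<and> A' \<noteq> {} \<and> strongly_connected R A' \<and>
     (\<forall>B. A' \<subset> B \<and> B \<subseteq> A \<longrightarrow> \<not> strongly_connected R B)"

end

theory Submission
  imports Defs
begin

lemma path_in_C:
  assumes "(x, y) \<in> R\<^sup>*" "(y, a) \<in> R\<^sup>*" "(a, x) \<in> R\<^sup>*"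
  shows "(x, y) \<in> (restrict_rel R {z. (a, z) \<in> R\<^sup>* \<and> (z, a) \<in> R\<^sup>*})\<^sup>*"
  using assms
proof (induction rule: rtrancl_induct)
  case base
  then show ?case by simp
next
  case (step y z)
  have ya: "(y, a) \<in> R\<^sup>*" using step.hyps(2) step.prems(1) by (rule converse_rtrancl_into_rtrancl)
  have ay: "(a, y) \<in> R\<^sup>*" using step.prems(2) step.hyps(1) by (rule rtrancl_trans)
  have az: "(a, z) \<in> R\<^sup>*" using ay step.hyps(2) by (rule rtrancl_into_rtrancl)
  have "(x, y) \<in> (restrict_rel R {z. (a, z) \<in> R\<^sup>* \<and> (z, a) \<in> R\<^sup>*})\<^sup>*"
    using step.IH ya step.prems(2) by blast
  moreover have "(y, z) \<in> restrict_rel R {z. (a, z) \<in> R\<^sup>* \<and> (z, a) \<in> R\<^sup>*}"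
    unfolding restrict_rel_def using step.hyps(2) step.prems(1) ya ay az by blast
  ultimately show ?case by (rule rtrancl_into_rtrancl)
qed

lemma reach_all:
  assumes init: "initial_set A R S" and aS: "a \<in> S" and xS: "x \<in> S"
  shows "(x, a) \<in> R\<^sup>*"
proof -
  let ?T = "{y \<in> S. (y, a) \<in> R\<^sup>*}"
  have adm: "admissible A R S" and min: "\<forall>T. T \<subset> S \<and> T \<noteq> {} \<longrightarrow> \<not> admissible A R T"
    using init unfolding initial_set_def by auto
  have SA: "S \<subseteq> A" and cf: "conflict_free R S"
    and def: "\<And>y b. y \<in> S \<Longrightarrow> (b, y) \<in> R \<Longrightarrow> \<exists>c\<in>S. (c, b) \<in> R"
    using adm unfolding admissible_def by auto
  have "admissible A R ?T"
    unfolding admissible_def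
  proof (intro conjI ballI allI impI)
    show "?T \<subseteq> A" using SA by auto
    show "conflict_free R ?T" using cf unfolding conflict_free_def by simp
  next
    fix y b assume y: "y \<in> ?T" and b: "(b, y) \<in> R"
    have yS: "y \<in> S" and ya: "(y, a) \<in> R\<^sup>*" using y by simp_all
    obtain c where c: "c \<in> S" "(c, b) \<in> R" using def[OF yS b] by blast
    have "(b, a) \<in> R\<^sup>*" using b ya by (rule converse_rtrancl_into_rtrancl)
    then have "(c, a) \<in> R\<^sup>*" using c(2) by (rule converse_rtrancl_into_rtrancl[rotated])
    then show "\<exists>c\<in>?T. (c, b) \<in> R" using c by blast
  qed
  moreover have "?T \<noteq> {}" using aS by auto
  ultimately have "\<not> ?T \<subset> S" using min by blast
  then have "?T = S" by blast
  then show ?thesis using xS by blast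
qed

theorem proposition1:
  fixes A :: "'a set" and R :: "'a rel" and S :: "'a set"
  assumes "AF A R"
    and "initial_set A R S"
  shows "\<exists>A'. is_SCC A R A' \<and> S \<subseteq> A'"
proof -
  have RA: "R \<subseteq> A \<times> A" using assms(1) unfolding AF_def by simp
  obtain a where aS: "a \<in> S" using assms(2) unfolding initial_set_def by blast
  have SA: "S \<subseteq> A" using assms(2) unfolding initial_set_def admissible_def by blast
  define C where "C = {z. (a, z) \<in> R\<^sup>* \<and> (z, a) \<in> R\<^sup>*}"
  have SC: "S \<subseteq> C" unfolding C_def using reach_all[OF assms(2) aS] reach_all[OF assms(2)] aS by blast
  have CA: "C \<subseteq> A"
  proof
    fix x assume "x \<in> C"
    then have "(x, a) \<in> R\<^sup>*" unfolding C_def by simp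
    then show "x \<in> A"
    proof (cases rule: converse_rtranclE)
      case base then show ?thesis using aS SA by blast
    next
      case (step y) then show ?thesis using RA by blast
    qed
  qed
  have sc: "strongly_connected R C"
    unfolding strongly_connected_def
  proof (intro ballI)
    fix x y assume "x \<in> C" "y \<in> C"
    then have xa: "(x, a) \<in> R\<^sup>*" and ay: "(a, y) \<in> R\<^sup>*" and ya: "(y, a) \<in> R\<^sup>*"
      and ax: "(a, x) \<in> R\<^sup>*" unfolding C_def by simp_all
    have "(x, y) \<in> R\<^sup>*" using xa ay by (rule rtrancl_trans)
    then show "(x, y) \<in> (restrict_rel R C)\<^sup>*" unfolding C_def using ya ax by (rule path_in_C)
  qed
  have maxi: "\<forall>B. C \<subset> B \<and> B \<subseteq> A \<longrightarrow> \<not> strongly_connected R B"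
  proof (intro allI impI notI)
    fix B assume B: "C \<subset> B \<and> B \<subseteq> A" and scB: "strongly_connected R B"
    then obtain x where x: "x \<in> B" "x \<notin> C" by blast
    have aB: "a \<in> B" using B aS SC by blast
    have sub: "(restrict_rel R B)\<^sup>* \<subseteq> R\<^sup>*"
      by (rule rtrancl_mono) (auto simp: restrict_rel_def)
    have "(a, x) \<in> R\<^sup>*" "(x, a) \<in> R\<^sup>*"
      using scB x aB sub unfolding strongly_connected_def by blast+
    then show False using x unfolding C_def by blast
  qed
  have "C \<noteq> {}" using SC aS by blast
  then have "is_SCC A R C" using CA sc maxi unfolding is_SCC_def by blast
  then show ?thesis using SC by blast
qed

end
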